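(* Let $\alpha,\rho\in(-\infty,1)\setminus\{0\}$ and $\sigma>0$, and let $a,b$ be constants. Consider the market with risk-free rate $r=0$ and risky asset $\mathrm{d}S_t=\sigma S_t\,\mathrm{d}W^1_t$ (that is, drift $\mu=0$). The force of mortality $\lambda_t$ follows $$\mathrm{d}\lambda_t=a\lambda_t^2\,\mathrm{d}t+b\lambda_t^{3/2}\,\mathrm{d}W^2_t,$$ with $W^2$ a Brownian motion independent of $W^1$. In an insured drawdown fund with longevity credits, the wealth satisfies $$\mathrm{d}w_t=(k\lambda_tw_t-c_t)\,\mathrm{d}t+q_t\sigma S_t\,\mathrm{d}W^1_t,$$ with $k=1$, where $c_t$ is the consumption rate and $q_t$ the quantity of the risky asset held. Preferences are continuous-time Epstein--Zin with mortality and discount rate $\delta=0$, with aggregator $$f(c,V,\lambda)=\frac1\rho c^\rho(\alpha V)^{1-\frac\rho\alpha}-\lambda V.$$ The associated Hamilton--Jacobi--Bellman equation for the value function $V(t,w,\lambda,S)$ is $$0=\sup_{c,q}\Big[\partial_tV+q\sigma^2S^2\partial_{wS}V+\tfrac12q^2\sigma^2S^2\partial_{ww}V+\tfrac12\sigma^2S^2\partial_{SS}V+a\lambda^2\partial_\lambda V+\tfrac12b^2\lambda^3\partial_{\lambda\lambda}V+\partial_wV\,(k\lambda w-c)+f(c,V,\lambda)\Big].$$ Then this equation has the trivial solution $V\equiv0$, together with the additional analytic solution $$V=\frac{w^\alpha}{\alpha}\,\lambda^{\frac{\alpha(\rho-1)}{\rho}}\left(\frac{(k\alpha-1)\rho}{\alpha(\rho-1)}+a+\frac{b^2(\alpha(\rho-1)-\rho)}{2\rho}\right)^{\frac{\alpha(\rho-1)}{\rho}},$$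 valid so long as the term in brackets is positive.
   Context: The continuous-time Epstein--Zin utility with mortality of a consumption stream is the solution $V$ of the backward SDE $\mathrm{d}V_t=-f(c_t,V_t,\lambda_t)\,\mathrm{d}t+Z_t\,\mathrm{d}W_t$ with $\lim_{t\to\infty}V_t=0$. The parameter $k\in\{0,1\}$ indicates whether longevity credits (the term $k\lambda w$ in the wealth drift) are paid; here $k=1$. *)

theory Defs
  imports "HOL-Analysis.Analysis"
begin

definition EZ_f :: "real \<Rightarrow> real \<Rightarrow> real \<Rightarrow> real \<Rightarrow> real \<Rightarrow> real" where
  "EZ_f \<alpha> \<rho> c v l = (1/\<rho>) * c powr \<rho> * (\<alpha> * v) powr (1 - \<rho>/\<alpha>) - l * v"

definition HJB_expr ::
  "real \<Rightarrow> real \<Rightarrow> real \<Rightarrow> real \<Rightarrow> real \<Rightarrow> real \<Rightarrow>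
   (real \<Rightarrow> real \<Rightarrow> real \<Rightarrow> real \<Rightarrow> real) \<Rightarrow>
   real \<Rightarrow> real \<Rightarrow> real \<Rightarrow> real \<Rightarrow> real \<Rightarrow> real \<Rightarrow> real" where
  "HJB_expr \<sigma> a b k \<alpha> \<rho> V t w l s c q =
     deriv (\<lambda>x. V x w l s) t
     + q * \<sigma>^2 * s^2 * deriv (\<lambda>y. deriv (\<lambda>x. V t x l y) w) s
     + (1/2) * q^2 * \<sigma>^2 * s^2 * deriv (\<lambda>x. deriv (\<lambda>y. V t y l s) x) w
     + (1/2) * \<sigma>^2 * s^2 * deriv (\<lambda>x. deriv (\<lambda>y. V t w l y) x) s
     + a * l^2 * deriv (\<lambda>x. V t w x s) l
     + (1/2) * b^2 * l^3 * deriv (\<lambda>x. deriv (\<lambda>y. V t w y s) x) l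
     + deriv (\<lambda>x. V t x l s) w * (k * l * w - c)
     + EZ_f \<alpha> \<rho> c (V t w l s) l"

definition sup_is_zero :: "(real \<Rightarrow> real \<Rightarrow> real) \<Rightarrow> bool" where
  "sup_is_zero H \<longleftrightarrow> (\<forall>c>0. \<forall>q. H c q \<le> 0) \<and> (\<forall>e>0. \<exists>c>0. \<exists>q. H c q > - e)"

definition solves_HJB ::
  "real \<Rightarrow> real \<Rightarrow> real \<Rightarrow> real \<Rightarrow> real \<Rightarrow> real \<Rightarrow>
   (real \<Rightarrow> real \<Rightarrow> real \<Rightarrow> real \<Rightarrow> real) \<Rightarrow> bool" where
  "solves_HJB \<sigma> a b k \<alpha> \<rho> V \<longleftrightarrow>
     (\<forall>t w l s. w > 0 \<longrightarrow> l > 0 \<longrightarrow> s > 0 \<longrightarrow>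
        sup_is_zero (HJB_expr \<sigma> a b k \<alpha> \<rho> V t w l s))"

end

theory Submission
  imports Defs
begin

lemma young_aux:
  fixes \<rho> u :: real assumes "\<rho> < 1" "\<rho> \<noteq> 0" "u > 0"
  shows "u powr \<rho> / \<rho> - u \<le> 1/\<rho> - 1"
proof -
  let ?f = "\<lambda>u::real. u - u powr \<rho> / \<rho>"
  have cv: "convex_on {0<..} ?f"
  proof (rule f''_ge0_imp_convex[where f' = "\<lambda>u. 1 - u powr (\<rho> - 1)" and f'' = "\<lambda>u. - ((\<rho> - 1) * u powr (\<rho> - 2))"])
    show "convex {0::real<..}" by simp
  next
    fix x :: real assume "x \<in> {0<..}"
    then show "DERIV ?f x :> 1 - x powr (\<rho> - 1)"
      using assms by (auto intro!: derivative_eq_intros)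
  next
    fix x :: real assume "x \<in> {0<..}"
    then show "DERIV (\<lambda>u. 1 - u powr (\<rho> - 1)) x :> - ((\<rho> - 1) * x powr (\<rho> - 2))"
      using assms by (auto intro!: derivative_eq_intros simp: algebra_simps)
  next
    fix x :: real assume "x \<in> {0<..}"
    then show "0 \<le> - ((\<rho> - 1) * x powr (\<rho> - 2))" using assms
      by (simp add: mult_nonpos_nonneg)
  qed
  have d: "(?f has_field_derivative 0) (at 1 within {0<..})"
    using assms by (auto intro!: derivative_eq_intros)
  have "?f u - ?f 1 \<ge> 0 * (u - 1)"
    by (rule convex_on_imp_above_tangent[OF cv _ _ _ d]) (use assms in \<open>auto simp: interior_open\<close>)
  then show ?thesis by simp
qed

lemma deriv_pow_w:
  fixes x0 p C :: real assumes "x0 > 0"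
  shows "deriv (\<lambda>x. x powr p * C) x0 = p * x0 powr (p - 1) * C"
  by (rule DERIV_imp_deriv) (use assms in \<open>auto intro!: derivative_eq_intros\<close>)

lemma deriv2_pow:
  fixes x0 p C :: real assumes "x0 > 0"
  shows "deriv (\<lambda>x. deriv (\<lambda>y. y powr p * C) x) x0 = p * (p - 1) * x0 powr (p - 2) * C"
proof -
  have "deriv (\<lambda>x. deriv (\<lambda>y. y powr p * C) x) x0 = deriv (\<lambda>x. p * x powr (p - 1) * C) x0"
  proof (rule deriv_cong_ev[OF _ refl])
    have "eventually (\<lambda>x. x \<in> {0<..}) (nhds x0)"
      using assms by (intro eventually_nhds_in_open) auto
    then show "eventually (\<lambda>x. deriv (\<lambda>y. y powr p * C) x = p * x powr (p - 1) * C) (nhds x0)"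
      by eventually_elim (simp add: deriv_pow_w)
  qed
  also have "\<dots> = p * (p - 1) * x0 powr (p - 2) * C"
    by (rule DERIV_imp_deriv) (use assms in \<open>auto intro!: derivative_eq_intros simp: algebra_simps\<close>)
  finally show ?thesis .
qed

lemma powr_m1: "(l::real) > 0 \<Longrightarrow> l * l powr (p - 1) = l powr p"
  by (simp add: powr_diff)
lemma powr_m2: "(l::real) > 0 \<Longrightarrow> l^2 * l powr (p - 2) = l powr p"
proof -
  assume l: "l > 0"
  have "l powr 2 = l^2" using l by (simp add: powr_numeral)
  then show ?thesis using l by (simp add: powr_diff)
qed

lemma main:
  fixes \<alpha> \<rho> \<sigma> a b K \<beta> :: real
  assumes al: "\<alpha> < 1" "\<alpha> \<noteq> 0" and rh: "\<rho> < 1" "\<rho> \<noteq> 0"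
    and Kdef: "K = (1 * \<alpha> - 1) * \<rho> / (\<alpha> * (\<rho> - 1)) + a
           + b^2 * (\<alpha> * (\<rho> - 1) - \<rho>) / (2 * \<rho>)" and Kpos: "K > 0"
    and bdef: "\<beta> = \<alpha> * (\<rho> - 1) / \<rho>"
  shows "solves_HJB \<sigma> a b 1 \<alpha> \<rho> (\<lambda>t w l s. w powr \<alpha> / \<alpha> * l powr \<beta> * K powr \<beta>)"
  unfolding solves_HJB_def
proof (intro allI impI)
  fix t w l s :: real
  assume w: "w > 0" and l: "l > 0" and s: "s > 0"
  define L where "L = l powr \<beta>"
  define A where "A = K powr \<beta>"
  define P where "P = w powr \<alpha>"
  define X where "X = P * L * A"
  have Lp: "L > 0" "A > 0" "P > 0" using l Kpos w by (auto simp: L_def A_def P_def)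
  have Xp: "X > 0" using Lp by (simp add: X_def)
  have f1: "(\<lambda>x. x powr \<alpha> / \<alpha> * L * A) = (\<lambda>x. x powr \<alpha> * (L * A / \<alpha>))" by auto
  have f2: "(\<lambda>x. P / \<alpha> * x powr \<beta> * A) = (\<lambda>x. x powr \<beta> * (P * A / \<alpha>))" by auto
  have dw: "deriv (\<lambda>x. x powr \<alpha> / \<alpha> * L * A) w = \<alpha> * w powr (\<alpha> - 1) * (L * A / \<alpha>)"
    unfolding f1 using w by (rule deriv_pow_w)
  have dww: "deriv (\<lambda>x. deriv (\<lambda>y. y powr \<alpha> / \<alpha> * L * A) x) w = \<alpha> * (\<alpha> - 1) * w powr (\<alpha> - 2) * (L * A / \<alpha>)"
    unfolding f1 using w by (rule deriv2_pow)
  have dl: "deriv (\<lambda>x. P / \<alpha> * x powr \<beta> * A) l = \<beta> * l powr (\<beta> - 1) * (P * A / \<alpha>)"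
    unfolding f2 using l by (rule deriv_pow_w)
  have dll: "deriv (\<lambda>x. deriv (\<lambda>y. P / \<alpha> * y powr \<beta> * A) x) l = \<beta> * (\<beta> - 1) * l powr (\<beta> - 2) * (P * A / \<alpha>)"
    unfolding f2 using l by (rule deriv2_pow)
  define Q where "Q = (\<lambda>q::real. (1/2) * q^2 * \<sigma>^2 * s^2 * ((\<alpha> - 1) * w powr (\<alpha> - 2) * L * A))"
  have Qle: "Q q \<le> 0" for q
  proof -
    have "(\<alpha> - 1) * w powr (\<alpha> - 2) * L * A \<le> 0" using al Lp w
      by (intro mult_nonpos_nonneg) (auto intro!: mult_nonpos_nonneg)
    moreover have "0 \<le> (1/2) * q^2 * \<sigma>^2 * s^2" by simp
    ultimately show ?thesis unfolding Q_def by (metis mult_nonneg_nonpos)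
  qed
  have key: "a * \<beta> / \<alpha> + (1/2) * b^2 * \<beta> * (\<beta> - 1) / \<alpha> + 1 - 1/\<alpha> = - K * (1 - \<rho>) / \<rho>"
    using al rh unfolding Kdef bdef by (simp add: field_simps)
  define cs where "cs = w * l * K"
  have csp: "cs > 0" using w l Kpos by (simp add: cs_def)
  have M: "cs powr \<rho> * X powr (1 - \<rho>/\<alpha>) = l * K * X"
  proof -
    have e: "\<beta> * \<rho> / \<alpha> = \<rho> - 1" using al rh bdef by (simp add: field_simps)
    have Xr: "X powr (\<rho>/\<alpha>) = w powr \<rho> * l powr (\<rho> - 1) * K powr (\<rho> - 1)"
      unfolding X_def P_def L_def A_def using w l Kpos al by (simp add: powr_mult powr_powr e)
    have Xm: "X powr (1 - \<rho>/\<alpha>) = X / X powr (\<rho>/\<alpha>)" using Xp by (simp add: powr_diff)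
    have cr: "cs powr \<rho> = w powr \<rho> * (l * l powr (\<rho> - 1)) * (K * K powr (\<rho> - 1))"
      unfolding cs_def using w l Kpos by (simp add: powr_mult powr_m1)
    show ?thesis unfolding Xm Xr cr using w l Kpos by (simp add: field_simps)
  qed
  have H: "HJB_expr \<sigma> a b 1 \<alpha> \<rho> (\<lambda>t w l s. w powr \<alpha> / \<alpha> * l powr \<beta> * K powr \<beta>) t w l s c q
     = Q q + l * K * X * ((c / cs) powr \<rho> / \<rho> - c / cs - (1/\<rho> - 1))" if c: "c > 0" for c q
  proof -
    have "HJB_expr \<sigma> a b 1 \<alpha> \<rho> (\<lambda>t w l s. w powr \<alpha> / \<alpha> * l powr \<beta> * K powr \<beta>) t w l s c q
      = (1/2) * q^2 * \<sigma>^2 * s^2 * (\<alpha> * (\<alpha> - 1) * w powr (\<alpha> - 2) * (L * A / \<alpha>))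
        + a * l^2 * (\<beta> * l powr (\<beta> - 1) * (P * A / \<alpha>))
        + (1/2) * b^2 * l^3 * (\<beta> * (\<beta> - 1) * l powr (\<beta> - 2) * (P * A / \<alpha>))
        + \<alpha> * w powr (\<alpha> - 1) * (L * A / \<alpha>) * (1 * l * w - c)
        + (1/\<rho>) * c powr \<rho> * (\<alpha> * (P / \<alpha> * L * A)) powr (1 - \<rho>/\<alpha>) - l * (P / \<alpha> * L * A)"
      unfolding HJB_expr_def EZ_f_def L_def[symmetric] A_def[symmetric] P_def[symmetric]
      by (simp only: dw dww dl dll deriv_const)
    also have "\<dots> = Q q + l * X * (a * \<beta> / \<alpha> + (1/2) * b^2 * \<beta> * (\<beta> - 1) / \<alpha> + 1 - 1/\<alpha>)
        - X / w * c + (1/\<rho>) * c powr \<rho> * X powr (1 - \<rho>/\<alpha>)"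
    proof -
      have 1: "l powr (\<beta> - 1) = L / l" unfolding L_def using l
        by (simp add: powr_diff)
      have 2: "l powr (\<beta> - 2) = L / l^2" unfolding L_def using l powr_m2[OF l, of \<beta>]
        by (simp add: field_simps)
      have 3: "w powr (\<alpha> - 1) = P / w" unfolding P_def using w by (simp add: powr_diff)
      have 4: "\<alpha> * (P / \<alpha> * L * A) = X" using al by (simp add: X_def)
      show ?thesis unfolding 1 2 3 4 Q_def X_def using al w l
        by (simp add: field_simps power2_eq_square power3_eq_cube)
    qed
    also have "\<dots> = Q q + l * K * X * ((c / cs) powr \<rho> / \<rho> - c / cs - (1/\<rho> - 1))"
    proof -
      have "c powr \<rho> * X powr (1 - \<rho>/\<alpha>) = (c / cs) powr \<rho> * (l * K * X)"
        unfolding M[symmetric] using c csp by (simp add: powr_divide)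
      then show ?thesis unfolding key using csp c rh w l Kpos by (simp add: cs_def field_simps)
    qed
    finally show ?thesis .
  qed
  show "sup_is_zero (HJB_expr \<sigma> a b 1 \<alpha> \<rho> (\<lambda>t w l s. w powr \<alpha> / \<alpha> * l powr \<beta> * K powr \<beta>) t w l s)"
    unfolding sup_is_zero_def
  proof (intro conjI allI impI)
    fix c q :: real assume c: "c > 0"
    have "(c / cs) powr \<rho> / \<rho> - c / cs - (1/\<rho> - 1) \<le> 0"
      using young_aux[OF rh, of "c/cs"] c csp by simp
    then have "l * K * X * ((c / cs) powr \<rho> / \<rho> - c / cs - (1/\<rho> - 1)) \<le> 0"
      using l Kpos Xp by (intro mult_nonneg_nonpos) auto
    then show "HJB_expr \<sigma> a b 1 \<alpha> \<rho> (\<lambda>t w l s. w powr \<alpha> / \<alpha> * l powr \<beta> * K powr \<beta>) t w l s c q \<le> 0"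
      using H[OF c] Qle[of q] by simp
  next
    fix e :: real assume e: "e > 0"
    have "HJB_expr \<sigma> a b 1 \<alpha> \<rho> (\<lambda>t w l s. w powr \<alpha> / \<alpha> * l powr \<beta> * K powr \<beta>) t w l s cs 0 = 0"
      using H[OF csp, of 0] csp by (simp add: Q_def)
    then show "\<exists>c>0. \<exists>q. HJB_expr \<sigma> a b 1 \<alpha> \<rho> (\<lambda>t w l s. w powr \<alpha> / \<alpha> * l powr \<beta> * K powr \<beta>) t w l s c q > - e"
      using csp e by (intro exI[of _ cs] conjI exI[of _ 0]) auto
  qed
qed


theorem theorem4:
  fixes \<alpha> \<rho> \<sigma> a b :: real
  assumes "\<alpha> < 1" "\<alpha> \<noteq> 0" "\<rho> < 1" "\<rho> \<noteq> 0" "\<sigma> > 0"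
    and "(1 * \<alpha> - 1) * \<rho> / (\<alpha> * (\<rho> - 1)) + a
           + b^2 * (\<alpha> * (\<rho> - 1) - \<rho>) / (2 * \<rho>) > 0"
  shows "solves_HJB \<sigma> a b 1 \<alpha> \<rho> (\<lambda>t w l s. 0)
       \<and> solves_HJB \<sigma> a b 1 \<alpha> \<rho>
           (\<lambda>t w l s. w powr \<alpha> / \<alpha> * l powr (\<alpha> * (\<rho> - 1) / \<rho>)
              * ((1 * \<alpha> - 1) * \<rho> / (\<alpha> * (\<rho> - 1)) + a
                 + b^2 * (\<alpha> * (\<rho> - 1) - \<rho>) / (2 * \<rho>)) powr (\<alpha> * (\<rho> - 1) / \<rho>))"
proof
  show "solves_HJB \<sigma> a b 1 \<alpha> \<rho> (\<lambda>t w l s. 0)"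
    unfolding solves_HJB_def sup_is_zero_def HJB_expr_def EZ_f_def
    by (auto intro!: exI[of _ 1])
  show "solves_HJB \<sigma> a b 1 \<alpha> \<rho>
           (\<lambda>t w l s. w powr \<alpha> / \<alpha> * l powr (\<alpha> * (\<rho> - 1) / \<rho>)
              * ((1 * \<alpha> - 1) * \<rho> / (\<alpha> * (\<rho> - 1)) + a
                 + b^2 * (\<alpha> * (\<rho> - 1) - \<rho>) / (2 * \<rho>)) powr (\<alpha> * (\<rho> - 1) / \<rho>))"
    by (rule main[OF assms(1-4) refl assms(6) refl])
qed

end
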